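(* Under the exploration assumption in the context, for any policy $\pi$ with $\pi_{\min}:=\min_{s,a}\pi(a\mid s)>0$, the pair \[ \bar C_\pi=\Big(1-\tfrac12\delta_b\pi_{\min}^{r_b+1}\mu_{\pi_b,\min}\pi_{b,\min}\Big)^{-1},\qquad\bar\rho_\pi=\Big(1-\tfrac12\delta_b\pi_{\min}^{r_b+1}\mu_{\pi_b,\min}\pi_{b,\min}\Big)^{1/(r_b+1)} \] are valid mixing parameters of the lazy transition matrix $\bar{\mathcal P}_\pi$, i.e. $\max_{(s,a)}\|\bar{\mathcal P}_\pi^k((s,a),\cdot)-\bar\mu_\pi\|_{\mathrm{TV}}\le\bar C_\pi\bar\rho_\pi^k$ for all $k\ge0$.
   Context: Finite MDP: states $\mathcal S$, actions $\mathcal A$, kernel $p(s'\mid s,a)$. Exploration assumption: a policy $\pi_b$ with $\pi_b(a\mid s)>0$ for all $(s,a)$ induces an irreducible state chain $P_{\pi_b}(s,s')=\sum_ap(s'\mid s,a)\pi_b(a\mid s)$; $\pi_{b,\min}=\min_{s,a}\pi_b(a\mid s)$; $\mu_{\pi_b}$ its stationary distribution and $\mu_{\pi_b,\min}=\min_s\mu_{\pi_b}(s)$; $\mathcal P_{\pi_b}=(P_{\pi_b}+I)/2$; $r_b\in\mathbb Z_+$ and $\delta_b>0$ satisfy $\min_{s,s'}\mathcal P_{\pi_b}^{r_b}(s,s')\ge\delta_b$. For a policy $\pi$ with positive entries, $\bar P_\pi((s,a),(s',a'))=p(s'\mid s,a)\pi(a'\mid s')$ is the state-action transition matrix, $\bar{\mathcal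 P}_\pi=(\bar P_\pi+I)/2$ its lazy version, and $\bar\mu_\pi(s,a)=\mu_\pi(s)\pi(a\mid s)$ its stationary distribution, with $\mu_\pi$ the stationary distribution of the state chain $P_\pi$. $\|\cdot\|_{\mathrm{TV}}$ is the total variation distance. *)

theory Defs
  imports Complex_Main
begin

definition mmult :: "('i::finite \<Rightarrow> 'i \<Rightarrow> real) \<Rightarrow> ('i \<Rightarrow> 'i \<Rightarrow> real) \<Rightarrow> 'i \<Rightarrow> 'i \<Rightarrow> real" where
  "mmult A B i j = (\<Sum>k\<in>UNIV. A i k * B k j)"

definition mid :: "'i \<Rightarrow> 'i \<Rightarrow> real" where
  "mid i j = (if i = j then 1 else 0)"

fun mpow :: "('i::finite \<Rightarrow> 'i \<Rightarrow> real) \<Rightarrow> nat \<Rightarrow> 'i \<Rightarrow> 'i \<Rightarrow> real" where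
  "mpow A 0 = mid"
| "mpow A (Suc n) = mmult (mpow A n) A"

definition lazy :: "('i \<Rightarrow> 'i \<Rightarrow> real) \<Rightarrow> 'i \<Rightarrow> 'i \<Rightarrow> real" where
  "lazy A i j = (A i j + mid i j) / 2"

definition irreducible_chain :: "('i::finite \<Rightarrow> 'i \<Rightarrow> real) \<Rightarrow> bool" where
  "irreducible_chain A \<longleftrightarrow> (\<forall>i j. \<exists>n. mpow A n i j > 0)"

definition is_distribution :: "('i::finite \<Rightarrow> real) \<Rightarrow> bool" where
  "is_distribution d \<longleftrightarrow> (\<forall>i. d i \<ge> 0) \<and> (\<Sum>i\<in>UNIV. d i) = 1"

definition stationary :: "('i::finite \<Rightarrow> 'i \<Rightarrow> real) \<Rightarrow> ('i \<Rightarrow> real) \<Rightarrow> bool" where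
  "stationary A d \<longleftrightarrow> is_distribution d \<and> (\<forall>j. (\<Sum>i\<in>UNIV. d i * A i j) = d j)"

definition tv_dist :: "('i::finite \<Rightarrow> real) \<Rightarrow> ('i \<Rightarrow> real) \<Rightarrow> real" where
  "tv_dist d e = (\<Sum>i\<in>UNIV. \<bar>d i - e i\<bar>) / 2"

text \<open>MDP: kernel p s a s' = p(s'|s,a); policy pol s a = pol(a|s).\<close>

definition is_kernel :: "('s::finite \<Rightarrow> 'a::finite \<Rightarrow> 's \<Rightarrow> real) \<Rightarrow> bool" where
  "is_kernel p \<longleftrightarrow> (\<forall>s a. is_distribution (p s a))"

definition is_policy :: "('s::finite \<Rightarrow> 'a::finite \<Rightarrow> real) \<Rightarrow> bool" where
  "is_policy pol \<longleftrightarrow> (\<forall>s. is_distribution (pol s))"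

definition state_chain :: "('s::finite \<Rightarrow> 'a::finite \<Rightarrow> 's \<Rightarrow> real) \<Rightarrow> ('s \<Rightarrow> 'a \<Rightarrow> real) \<Rightarrow> 's \<Rightarrow> 's \<Rightarrow> real" where
  "state_chain p pol s s' = (\<Sum>a\<in>UNIV. p s a s' * pol s a)"

definition sa_chain :: "('s \<Rightarrow> 'a \<Rightarrow> 's \<Rightarrow> real) \<Rightarrow> ('s \<Rightarrow> 'a \<Rightarrow> real) \<Rightarrow> ('s \<times> 'a) \<Rightarrow> ('s \<times> 'a) \<Rightarrow> real" where
  "sa_chain p pol x y = p (fst x) (snd x) (fst y) * pol (fst y) (snd y)"

definition pol_min :: "('s::finite \<Rightarrow> 'a::finite \<Rightarrow> real) \<Rightarrow> real" where
  "pol_min pol = Min {pol s a |s a. True}"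

end

theory Submission
  imports Defs
begin

definition vm :: "('i::finite \<Rightarrow> real) \<Rightarrow> ('i \<Rightarrow> 'i \<Rightarrow> real) \<Rightarrow> 'i \<Rightarrow> real" where
  "vm u A j = (\<Sum>i\<in>UNIV. u i * A i j)"

definition stoch :: "('i::finite \<Rightarrow> 'i \<Rightarrow> real) \<Rightarrow> bool" where
  "stoch A \<longleftrightarrow> (\<forall>i j. A i j \<ge> 0) \<and> (\<forall>i. (\<Sum>j\<in>UNIV. A i j) = 1)"

lemma mmult_row: "mmult A B i = vm (A i) B"
  by (auto simp: mmult_def vm_def)

lemma vm_mmult: "vm u (mmult A B) = vm (vm u A) B"
proof
  fix j
  have "vm u (mmult A B) j = (\<Sum>i\<in>UNIV. \<Sum>k\<in>UNIV. u i * (A i k * B k j))"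
    by (simp add: vm_def mmult_def sum_distrib_left)
  also have "\<dots> = (\<Sum>k\<in>UNIV. \<Sum>i\<in>UNIV. u i * A i k * B k j)"
    by (subst sum.swap) (simp add: mult.assoc)
  also have "\<dots> = vm (vm u A) B j"
    by (simp add: vm_def sum_distrib_right)
  finally show "vm u (mmult A B) j = vm (vm u A) B j" .
qed

lemma mmult_assoc: "mmult (mmult A B) C = mmult A (mmult B C)"
  by (rule ext) (simp add: mmult_row vm_mmult)

lemma vm_mid: "vm u mid = u"
  by (rule ext) (simp add: vm_def mid_def if_distrib[of "\<lambda>x. _ * x"] cong: if_cong)

lemma mid_vm: "vm (mid x) B = B x"
  by (rule ext) (simp add: vm_def mid_def if_distrib[of "\<lambda>x. x * _"] cong: if_cong)

lemma mmult_mid_right: "mmult A mid = A"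
  by (rule ext) (simp add: mmult_row vm_mid)

lemma mmult_mid_left: "mmult mid A = A"
  by (rule ext) (simp add: mmult_row mid_vm)

lemma mpow_add: "mpow A (m + n) = mmult (mpow A m) (mpow A n)"
  by (induction n) (simp_all add: mmult_mid_right mmult_assoc)

lemma mpow_Suc': "mpow A (Suc n) = mmult A (mpow A n)"
  using mpow_add[of A 1 n] by (simp add: mmult_mid_left)

lemma vm_mpow_Suc: "vm u (mpow A (Suc n)) = vm (vm u (mpow A n)) A"
  by (simp add: vm_mmult)

lemma stoch_mmult: assumes "stoch A" "stoch B" shows "stoch (mmult A B)"
proof -
  have "mmult A B i j \<ge> 0" for i j using assms
    by (auto simp: stoch_def mmult_def intro!: sum_nonneg)
  moreover have "(\<Sum>j\<in>UNIV. mmult A B i j) = 1" for i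
  proof -
    have "(\<Sum>j\<in>UNIV. mmult A B i j) = (\<Sum>k\<in>UNIV. A i k * (\<Sum>j\<in>UNIV. B k j))"
      unfolding mmult_def by (subst sum.swap) (simp add: sum_distrib_left)
    also have "\<dots> = 1" using assms by (simp add: stoch_def)
    finally show ?thesis .
  qed
  ultimately show ?thesis by (simp add: stoch_def)
qed

lemma stoch_mid: "stoch (mid :: 'i::finite \<Rightarrow> 'i \<Rightarrow> real)"
  by (simp add: stoch_def mid_def)

lemma stoch_mpow: "stoch A \<Longrightarrow> stoch (mpow A n)"
  by (induction n) (simp_all add: stoch_mid stoch_mmult)

lemma stoch_lazy: assumes "stoch A" shows "stoch (lazy A)"
proof -
  have "(\<Sum>j\<in>UNIV. lazy A i j) = 1" for i
  proof -
    have "(\<Sum>j\<in>UNIV. lazy A i j) = ((\<Sum>j\<in>UNIV. A i j) + (\<Sum>j\<in>UNIV. mid i j)) / 2"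
      unfolding lazy_def sum_divide_distrib[symmetric] sum.distrib by simp
    also have "\<dots> = 1" using assms stoch_mid[where 'i='a] by (simp add: stoch_def)
    finally show ?thesis .
  qed
  thus ?thesis using assms by (auto simp: stoch_def lazy_def mid_def)
qed

lemma stoch_le1: assumes "stoch A" shows "A i j \<le> 1"
proof -
  have "A i j \<le> (\<Sum>j\<in>UNIV. A i j)"
    using assms by (intro member_le_sum) (auto simp: stoch_def)
  thus ?thesis using assms by (simp add: stoch_def)
qed

lemma dist_vm: assumes "is_distribution u" "stoch A" shows "is_distribution (vm u A)"
proof -
  have "(\<Sum>j\<in>UNIV. vm u A j) = (\<Sum>i\<in>UNIV. u i * (\<Sum>j\<in>UNIV. A i j))"
    unfolding vm_def by (subst sum.swap) (simp add: sum_distrib_left)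
  also have "\<dots> = 1" using assms by (simp add: stoch_def is_distribution_def)
  finally show ?thesis using assms
    by (auto simp: is_distribution_def stoch_def vm_def intro!: sum_nonneg)
qed

lemma dist_le1: assumes "is_distribution u" shows "u i \<le> 1"
proof -
  have "u i \<le> (\<Sum>j\<in>UNIV. u j)"
    using assms by (intro member_le_sum) (auto simp: is_distribution_def)
  thus ?thesis using assms by (simp add: is_distribution_def)
qed

lemma tv_le1: assumes "is_distribution u" "is_distribution v" shows "tv_dist u v \<le> 1"
proof -
  have "(\<Sum>i\<in>UNIV. \<bar>u i - v i\<bar>) \<le> (\<Sum>i\<in>UNIV. u i + v i)"
  proof (intro sum_mono)
    fix i
    have "u i \<ge> 0" "v i \<ge> 0" using assms by (auto simp: is_distribution_def)
    then show "\<bar>u i - v i\<bar> \<le> u i + v i" by (simp add: abs_le_iff)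
  qed
  also have "\<dots> = 2" using assms by (simp add: sum.distrib is_distribution_def)
  finally show ?thesis by (simp add: tv_dist_def)
qed

lemma tv_contract:
  fixes u v :: "'i::finite \<Rightarrow> real"
  assumes M: "stoch M" and c: "\<forall>i j. M i j \<ge> c" "c \<ge> 0"
    and u: "is_distribution u" and v: "is_distribution v"
  shows "tv_dist (vm u M) (vm v M) \<le> (1 - c) * tv_dist u v"
proof -
  have N: "real (card (UNIV :: 'i set)) \<ge> 1"
    using finite_UNIV_card_ge_0[where 'a='i] by simp
  have s0: "(\<Sum>i\<in>UNIV. u i - v i) = 0" using u v by (simp add: sum_subtractf is_distribution_def)
  have "\<bar>vm u M j - vm v M j\<bar> \<le> (\<Sum>i\<in>UNIV. \<bar>u i - v i\<bar> * (M i j - c))" for j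
  proof -
    have "vm u M j - vm v M j = (\<Sum>i\<in>UNIV. (u i - v i) * M i j)"
      by (simp add: vm_def sum_subtractf left_diff_distrib)
    also have "\<dots> = (\<Sum>i\<in>UNIV. (u i - v i) * (M i j - c)) + (\<Sum>i\<in>UNIV. u i - v i) * c"
      unfolding sum_distrib_right sum.distrib[symmetric] by (intro sum.cong) (auto simp: algebra_simps)
    also have "\<dots> = (\<Sum>i\<in>UNIV. (u i - v i) * (M i j - c))" using s0 by simp
    finally have "\<bar>vm u M j - vm v M j\<bar> = \<bar>\<Sum>i\<in>UNIV. (u i - v i) * (M i j - c)\<bar>" by simp
    also have "\<dots> \<le> (\<Sum>i\<in>UNIV. \<bar>(u i - v i) * (M i j - c)\<bar>)" by (rule sum_abs)
    also have "\<dots> = (\<Sum>i\<in>UNIV. \<bar>u i - v i\<bar> * (M i j - c))"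
      using c by (intro sum.cong) (auto simp: abs_mult)
    finally show ?thesis .
  qed
  hence "(\<Sum>j\<in>UNIV. \<bar>vm u M j - vm v M j\<bar>) \<le> (\<Sum>j\<in>UNIV. \<Sum>i\<in>UNIV. \<bar>u i - v i\<bar> * (M i j - c))"
    by (intro sum_mono)
  also have "\<dots> = (\<Sum>i\<in>UNIV. \<bar>u i - v i\<bar> * (\<Sum>j\<in>UNIV. M i j - c))"
    by (subst sum.swap) (simp add: sum_distrib_left)
  also have "\<dots> = (\<Sum>i\<in>UNIV. \<bar>u i - v i\<bar> * (1 - real (card (UNIV :: 'i set)) * c))"
    using M by (simp add: sum_subtractf stoch_def)
  also have "\<dots> \<le> (\<Sum>i\<in>UNIV. \<bar>u i - v i\<bar> * (1 - c))"
  proof (intro sum_mono mult_left_mono)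
    show "1 - real (card (UNIV :: 'i set)) * c \<le> 1 - c" for i
      using N c mult_right_mono[OF N c(2)] by simp
  qed simp
  also have "\<dots> = (1 - c) * (\<Sum>i\<in>UNIV. \<bar>u i - v i\<bar>)"
    by (simp add: sum_distrib_left mult.commute)
  finally show ?thesis by (simp add: tv_dist_def)
qed

lemma tv_nonexp:
  assumes M: "stoch M" and u: "is_distribution u" and v: "is_distribution v"
  shows "tv_dist (vm u (mpow M n)) (vm v (mpow M n)) \<le> tv_dist u v"
proof (induction n)
  case 0 then show ?case by (simp add: vm_mid)
next
  case (Suc n)
  have "tv_dist (vm u (mpow M (Suc n))) (vm v (mpow M (Suc n)))
     \<le> (1 - 0) * tv_dist (vm u (mpow M n)) (vm v (mpow M n))"
    unfolding vm_mpow_Suc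
    using M u v by (intro tv_contract dist_vm stoch_mpow) (auto simp: stoch_def)
  with Suc show ?case by simp
qed


lemma sum_prod_UNIV:
  "(\<Sum>x\<in>(UNIV::('s::finite \<times> 'a::finite) set). f x) = (\<Sum>s\<in>UNIV. \<Sum>a\<in>UNIV. f (s, a))"
  by (subst UNIV_Times_UNIV[symmetric], subst sum.cartesian_product) simp

lemma vm_lazy: "vm u (lazy A) j = (vm u A j + u j) / 2"
proof -
  have "vm u (lazy A) j = (vm u A j + vm u mid j) / 2"
    unfolding vm_def lazy_def by (simp add: sum_divide_distrib[symmetric] sum.distrib algebra_simps)
  thus ?thesis by (simp add: vm_mid)
qed

lemma vm_sa_chain:
  "vm (\<lambda>x. \<nu> (fst x) * pol (fst x) (snd x)) (sa_chain p pol) y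
   = vm \<nu> (state_chain p pol) (fst y) * pol (fst y) (snd y)"
proof -
  have "vm (\<lambda>x. \<nu> (fst x) * pol (fst x) (snd x)) (sa_chain p pol) y
     = (\<Sum>s\<in>UNIV. \<Sum>a\<in>UNIV. \<nu> s * pol s a * (p s a (fst y) * pol (fst y) (snd y)))"
    unfolding vm_def sa_chain_def by (subst sum_prod_UNIV) simp
  also have "\<dots> = (\<Sum>s\<in>UNIV. \<nu> s * (\<Sum>a\<in>UNIV. p s a (fst y) * pol s a)) * pol (fst y) (snd y)"
    by (simp add: sum_distrib_left sum_distrib_right algebra_simps)
  finally show ?thesis by (simp add: vm_def state_chain_def)
qed

lemma vm_prod_lazy:
  "vm (\<lambda>x. \<nu> (fst x) * pol (fst x) (snd x)) (lazy (sa_chain p pol))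
   = (\<lambda>y. vm \<nu> (lazy (state_chain p pol)) (fst y) * pol (fst y) (snd y))"
  by (rule ext) (simp add: vm_lazy vm_sa_chain algebra_simps add_divide_distrib)

lemma vm_prod_mpow:
  "vm (\<lambda>x. \<nu> (fst x) * pol (fst x) (snd x)) (mpow (lazy (sa_chain p pol)) n)
   = (\<lambda>y. vm \<nu> (mpow (lazy (state_chain p pol)) n) (fst y) * pol (fst y) (snd y))"
proof (induction n)
  case 0 show ?case by (simp add: vm_mid)
next
  case (Suc n) show ?case
    unfolding vm_mpow_Suc Suc vm_prod_lazy[of "vm \<nu> (mpow (lazy (state_chain p pol)) n)", symmetric]
    ..
qed

lemma stoch_state_chain: assumes "is_kernel p" "is_policy pol" shows "stoch (state_chain p pol)"
proof -
  have "(\<Sum>s'\<in>UNIV. state_chain p pol s s') = 1" for s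
  proof -
    have "(\<Sum>s'\<in>UNIV. state_chain p pol s s') = (\<Sum>a\<in>UNIV. pol s a * (\<Sum>s'\<in>UNIV. p s a s'))"
      unfolding state_chain_def by (subst sum.swap) (simp add: sum_distrib_left mult.commute)
    also have "\<dots> = 1" using assms by (simp add: is_kernel_def is_policy_def is_distribution_def)
    finally show ?thesis .
  qed
  moreover have "state_chain p pol s s' \<ge> 0" for s s'
    using assms unfolding state_chain_def is_kernel_def is_policy_def is_distribution_def
    by (intro sum_nonneg) simp
  ultimately show ?thesis by (simp add: stoch_def)
qed

lemma stoch_sa_chain: assumes "is_kernel p" "is_policy pol" shows "stoch (sa_chain p pol)"
proof -
  have "(\<Sum>y\<in>UNIV. sa_chain p pol x y) = 1" for x
  proof -
    have "(\<Sum>y\<in>UNIV. sa_chain p pol x y) = (\<Sum>s'\<in>UNIV. p (fst x) (snd x) s' * (\<Sum>a'\<in>UNIV. pol s' a'))"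
      unfolding sa_chain_def by (subst sum_prod_UNIV) (simp add: sum_distrib_left)
    also have "\<dots> = 1" using assms by (simp add: is_kernel_def is_policy_def is_distribution_def)
    finally show ?thesis .
  qed
  moreover have "sa_chain p pol x y \<ge> 0" for x y
    using assms unfolding sa_chain_def is_kernel_def is_policy_def is_distribution_def
    by simp
  ultimately show ?thesis by (simp add: stoch_def)
qed

lemma pol_min_set: "{pol s a |s a. True} = (\<lambda>x. pol (fst x) (snd x)) ` UNIV"
  by (auto simp: image_def)

lemma pol_min_le: "pol_min (pol :: 's::finite \<Rightarrow> 'a::finite \<Rightarrow> real) \<le> pol s a"
  unfolding pol_min_def pol_min_set by (rule Min_le) (auto intro: rev_image_eqI[of "(s,a)"])

lemma pol_min_in: "\<exists>s a. pol_min (pol :: 's::finite \<Rightarrow> 'a::finite \<Rightarrow> real) = pol s a"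
proof -
  have "pol_min pol \<in> (\<lambda>x. pol (fst x) (snd x)) ` UNIV"
    unfolding pol_min_def pol_min_set by (rule Min_in) auto
  thus ?thesis by auto
qed

lemma mpow_nonneg: "\<forall>i j. B i j \<ge> 0 \<Longrightarrow> mpow B n i j \<ge> 0"
  by (induction n arbitrary: i j) (auto simp: mid_def mmult_def intro!: sum_nonneg)

lemma mpow_ge:
  assumes A: "\<forall>i j. A i j \<ge> c * B i j" and B: "\<forall>i j. B i j \<ge> 0" and c: "c \<ge> 0"
  shows "mpow A n i j \<ge> c ^ n * mpow B n i j"
proof (induction n arbitrary: i j)
  case 0 show ?case by (simp add: mid_def)
next
  case (Suc n)
  have "c ^ Suc n * mpow B (Suc n) i j = (\<Sum>k\<in>UNIV. (c ^ n * mpow B n i k) * (c * B k j))"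
    by (simp add: mmult_def sum_distrib_left algebra_simps)
  also have "\<dots> \<le> (\<Sum>k\<in>UNIV. mpow A n i k * A k j)"
  proof (intro sum_mono mult_mono)
    fix k
    show "c ^ n * mpow B n i k \<le> mpow A n i k" using Suc .
    show "c * B k j \<le> A k j" using A by simp
    show "0 \<le> mpow A n i k" using Suc[of i k] mpow_nonneg[OF B, of n i k] c
      by (meson order_trans zero_le_mult_iff zero_le_power)
    show "0 \<le> c * B k j" using B c by simp
  qed
  finally show ?case by (simp add: mmult_def)
qed


theorem lemma8:
  fixes p :: "'s::finite \<Rightarrow> 'a::finite \<Rightarrow> 's \<Rightarrow> real"
    and pib pol :: "'s \<Rightarrow> 'a \<Rightarrow> real"
    and mub mu :: "'s \<Rightarrow> real"
    and rb :: nat and deltab :: real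
  assumes kernel: "is_kernel p"
    and pib_pol: "is_policy pib" and pib_pos: "\<forall>s a. pib s a > 0"
    and irred: "irreducible_chain (state_chain p pib)"
    and mub_stat: "stationary (state_chain p pib) mub"
    and deltab_pos: "deltab > 0"
    and doeblin: "\<forall>s s'. mpow (lazy (state_chain p pib)) rb s s' \<ge> deltab"
    and pi_pol: "is_policy pol" and pi_pos: "pol_min pol > 0"
    and mu_stat: "stationary (state_chain p pol) mu"
  shows "\<forall>k::nat. \<forall>x::'s \<times> 'a.
     tv_dist (mpow (lazy (sa_chain p pol)) k x) (\<lambda>(s, a). mu s * pol s a)
     \<le> (1 / (1 - deltab * pol_min pol ^ (rb + 1) * Min (range mub) * pol_min pib / 2))
       * ((1 - deltab * pol_min pol ^ (rb + 1) * Min (range mub) * pol_min pib / 2)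
           powr (1 / real (rb + 1))) ^ k"
proof (intro allI)
  fix k :: nat and x :: "'s \<times> 'a"
  define Ls where "Ls = lazy (state_chain p pol)"
  define Lb where "Lb = lazy (state_chain p pib)"
  define L where "L = lazy (sa_chain p pol)"
  define m where "m = pol_min pol"
  define th' where "th' = deltab * m ^ (rb + 1) / 2"
  define th where "th = deltab * pol_min pol ^ (rb + 1) * Min (range mub) * pol_min pib / 2"
  define mubar where "mubar = (\<lambda>x::'s \<times> 'a. mu (fst x) * pol (fst x) (snd x))"
  have stLs: "stoch Ls" unfolding Ls_def by (intro stoch_lazy stoch_state_chain kernel pi_pol)
  have stLb: "stoch Lb" unfolding Lb_def by (intro stoch_lazy stoch_state_chain kernel pib_pol)
  have stL: "stoch L" unfolding L_def by (intro stoch_lazy stoch_sa_chain kernel pi_pol)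
  have m0: "m > 0" using pi_pos by (simp add: m_def)
  have m1: "m \<le> 1"
  proof -
    obtain s a where "m = pol s a" using pol_min_in[of pol] by (auto simp: m_def)
    thus ?thesis using pi_pol dist_le1 by (auto simp: is_policy_def)
  qed
  have d1: "deltab \<le> 1"
    using doeblin stoch_le1[OF stoch_mpow[OF stLb, of rb]] unfolding Lb_def
    by (meson order_trans)
  have pib1: "pib s a \<le> 1" for s a using pib_pol dist_le1 by (auto simp: is_policy_def)
  have LsLb: "\<forall>i j. Ls i j \<ge> m * Lb i j"
  proof (intro allI)
    fix i j
    have "m * (\<Sum>a\<in>UNIV. p i a j * pib i a) = (\<Sum>a\<in>UNIV. p i a j * (m * pib i a))"
      by (simp add: sum_distrib_left algebra_simps)
    also have "\<dots> \<le> (\<Sum>a\<in>UNIV. p i a j * pol i a)"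
    proof (intro sum_mono mult_left_mono)
      fix a
      have "m * pib i a \<le> m" using pib1[of i a] m0 by (simp add: mult_left_le)
      also have "m \<le> pol i a" unfolding m_def by (rule pol_min_le)
      finally show "m * pib i a \<le> pol i a" .
      show "0 \<le> p i a j" using kernel by (simp add: is_kernel_def is_distribution_def)
    qed
    finally have "m * state_chain p pib i j \<le> state_chain p pol i j" by (simp add: state_chain_def)
    moreover have "m * mid i j \<le> mid i j" using m1 by (simp add: mid_def)
    ultimately show "Ls i j \<ge> m * Lb i j" unfolding Ls_def Lb_def lazy_def by argo
  qed
  have LsPow: "mpow Ls rb i j \<ge> m ^ rb * deltab" for i j
  proof -
    have "m ^ rb * deltab \<le> m ^ rb * mpow Lb rb i j"
      using doeblin m0 by (simp add: Lb_def)
    also have "\<dots> \<le> mpow Ls rb i j"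
      by (rule mpow_ge[OF LsLb]) (use stLb m0 in \<open>auto simp: stoch_def\<close>)
    finally show ?thesis .
  qed
  have minor: "\<forall>x y. mpow L (Suc rb) x y \<ge> th'"
  proof (intro allI)
    fix x y :: "'s \<times> 'a"
    define nu where "nu = (\<lambda>s'. p (fst x) (snd x) s' / 2)"
    have nud: "nu s' \<ge> 0" for s' using kernel by (simp add: nu_def is_kernel_def is_distribution_def)
    have nus: "(\<Sum>s'\<in>UNIV. nu s') = 1/2" using kernel
      by (simp add: nu_def is_kernel_def is_distribution_def sum_divide_distrib[symmetric])
    have lowL: "(\<lambda>z. nu (fst z) * pol (fst z) (snd z)) z \<le> L x z" for z
    proof -
      have "mid x z \<ge> 0" by (simp add: mid_def)
      thus ?thesis unfolding L_def lazy_def sa_chain_def nu_def by simp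
    qed
    have "vm (\<lambda>z. nu (fst z) * pol (fst z) (snd z)) (mpow L rb) y \<le> vm (L x) (mpow L rb) y"
    proof -
      have nn: "\<And>i j. 0 \<le> mpow L rb i j"
        using stoch_mpow[OF stL, of rb] unfolding stoch_def by blast
      show ?thesis unfolding vm_def
        by (intro sum_mono mult_right_mono nn) (use lowL in simp)
    qed
    also have "\<dots> = mpow L (Suc rb) x y" by (simp only: mpow_Suc' mmult_row)
    finally have 1: "vm nu (mpow Ls rb) (fst y) * pol (fst y) (snd y) \<le> mpow L (Suc rb) x y"
      unfolding L_def Ls_def vm_prod_mpow .
    have "(\<Sum>s'\<in>UNIV. nu s' * (m ^ rb * deltab)) \<le> vm nu (mpow Ls rb) (fst y)"
      unfolding vm_def by (intro sum_mono mult_left_mono LsPow nud)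
    hence 2: "m ^ rb * deltab / 2 \<le> vm nu (mpow Ls rb) (fst y)"
      by (simp add: sum_distrib_right[symmetric] nus)
    have "0 \<le> m ^ rb * deltab / 2" using m0 deltab_pos by simp
    with 2 have 3: "0 \<le> vm nu (mpow Ls rb) (fst y)" by linarith
    have "th' = (m ^ rb * deltab / 2) * m" by (simp add: th'_def)
    also have "\<dots> \<le> vm nu (mpow Ls rb) (fst y) * pol (fst y) (snd y)"
      using 2 3 m0 deltab_pos pol_min_le[of pol] unfolding m_def
      by (intro mult_mono) auto
    finally show "mpow L (Suc rb) x y \<ge> th'" using 1 by linarith
  qed
  have th'0: "th' \<ge> 0" using m0 deltab_pos by (simp add: th'_def)
  have th'1: "th' \<le> 1/2"
  proof -
    have "m ^ (rb + 1) \<le> 1" using m0 m1 by (intro power_le_one) auto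
    hence "deltab * m ^ (rb + 1) \<le> 1" using d1 deltab_pos m0 by (simp add: mult_le_one)
    thus ?thesis by (simp add: th'_def)
  qed
  have mub_d: "is_distribution mub" using mub_stat by (simp add: stationary_def)
  have Mmin: "0 \<le> Min (range mub) \<and> Min (range mub) \<le> 1"
  proof -
    have "Min (range mub) \<in> range mub" by (rule Min_in) auto
    then obtain s where "Min (range mub) = mub s" by (metis imageE)
    thus ?thesis using mub_d dist_le1[OF mub_d] by (auto simp: is_distribution_def)
  qed
  have Pmin: "0 \<le> pol_min pib \<and> pol_min pib \<le> 1"
  proof -
    obtain s a where "pol_min pib = pib s a" using pol_min_in[of pib] by auto
    thus ?thesis using pib_pos pib1 by (auto intro: less_imp_le)
  qed
  have prod01: "0 \<le> Min (range mub) * pol_min pib" "Min (range mub) * pol_min pib \<le> 1"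
    using Mmin Pmin by (auto simp: mult_le_one)
  have th_eq: "th = th' * (Min (range mub) * pol_min pib)"
    by (simp add: th_def th'_def m_def algebra_simps)
  have th0: "0 \<le> th" using th_eq th'0 prod01 by simp
  have thth': "th \<le> th'" using th_eq th'0 prod01 mult_left_le by metis
  have mu_d: "is_distribution mu" using mu_stat by (simp add: stationary_def)
  have vm_mu: "vm mu (state_chain p pol) = mu"
    using mu_stat by (auto simp: stationary_def vm_def)
  have vm_mubar: "vm mubar L = mubar"
    unfolding mubar_def L_def vm_prod_lazy by (rule ext) (simp add: vm_lazy vm_mu)
  have mubar_d: "is_distribution mubar"
  proof -
    have "(\<Sum>x\<in>UNIV. mubar x) = (\<Sum>s\<in>UNIV. mu s * (\<Sum>a\<in>UNIV. pol s a))"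
      unfolding mubar_def by (subst sum_prod_UNIV) (simp add: sum_distrib_left)
    also have "\<dots> = 1" using pi_pol mu_d by (simp add: is_policy_def is_distribution_def)
    finally show ?thesis using pi_pol mu_d
      by (auto simp: is_distribution_def is_policy_def mubar_def)
  qed
  have vm_mubar_pow: "vm mubar (mpow L n) = mubar" for n
    by (induction n) (simp_all add: vm_mid vm_mubar vm_mmult)
  have block: "\<forall>u v. is_distribution u \<longrightarrow> is_distribution v \<longrightarrow>
      tv_dist (vm u (mpow L (q * Suc rb))) (vm v (mpow L (q * Suc rb))) \<le> (1 - th') ^ q * tv_dist u v" for q
  proof (induction q)
    case 0 show ?case by (simp add: vm_mid)
  next
    case (Suc q)
    show ?case
    proof (intro allI impI)
      fix u v :: "'s \<times> 'a \<Rightarrow> real"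
      assume u: "is_distribution u" and v: "is_distribution v"
      have eq: "mpow L (Suc q * Suc rb) = mmult (mpow L (Suc rb)) (mpow L (q * Suc rb))"
      proof -
        have "Suc q * Suc rb = Suc rb + q * Suc rb" by simp
        thus ?thesis by (simp only: mpow_add[symmetric])
      qed
      have "tv_dist (vm u (mpow L (Suc q * Suc rb))) (vm v (mpow L (Suc q * Suc rb)))
          \<le> (1 - th') ^ q * tv_dist (vm u (mpow L (Suc rb))) (vm v (mpow L (Suc rb)))"
        unfolding eq vm_mmult
        using Suc u v stoch_mpow[OF stL] dist_vm by blast
      also have "\<dots> \<le> (1 - th') ^ q * ((1 - th') * tv_dist u v)"
        using th'1 by (intro mult_left_mono tv_contract stoch_mpow stL minor th'0 u v) auto
      finally show "tv_dist (vm u (mpow L (Suc q * Suc rb))) (vm v (mpow L (Suc q * Suc rb)))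
          \<le> (1 - th') ^ Suc q * tv_dist u v" by (simp add: algebra_simps)
    qed
  qed
  have mb: "(\<lambda>(s, a). mu s * pol s a) = mubar" by (auto simp: mubar_def)
  define q where "q = k div Suc rb"
  define r where "r = k mod Suc rb"
  have kqr: "k = q * Suc rb + r" unfolding q_def r_def by (rule div_mult_mod_eq[symmetric])
  have ex_d: "is_distribution (mid x)"
    by (simp add: is_distribution_def mid_def)
  have "tv_dist (mpow L k x) mubar
      = tv_dist (vm (vm (mid x) (mpow L (q * Suc rb))) (mpow L r))
                (vm (vm mubar (mpow L (q * Suc rb))) (mpow L r))"
  proof -
    have "mpow L k x = vm (vm (mid x) (mpow L (q * Suc rb))) (mpow L r)"
      by (simp only: kqr mpow_add mmult_row mid_vm)
    thus ?thesis by (simp only: vm_mubar_pow)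
  qed
  also have "\<dots> \<le> tv_dist (vm (mid x) (mpow L (q * Suc rb))) (vm mubar (mpow L (q * Suc rb)))"
    by (intro tv_nonexp stL dist_vm stoch_mpow ex_d mubar_d)
  also have "\<dots> \<le> (1 - th') ^ q * tv_dist (mid x) mubar"
    using block ex_d mubar_d by blast
  also have "\<dots> \<le> (1 - th') ^ q"
    using tv_le1[OF ex_d mubar_d] th'1 by (simp add: mult_left_le)
  also have "\<dots> \<le> (1 - th) ^ q"
    using thth' th'1 by (intro power_mono) auto
  also have "\<dots> \<le> (1 / (1 - th)) * ((1 - th) powr (1 / real (rb + 1))) ^ k"
  proof -
    define b where "b = 1 - th"
    have b0: "b > 0" "b \<le> 1" using th0 thth' th'1 by (auto simp: b_def)
    have "r < Suc rb" unfolding r_def by simp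
    hence "k \<le> (q + 1) * (rb + 1)" using kqr by simp
    hence "real k \<le> real (q + 1) * real (rb + 1)" by (metis of_nat_mono of_nat_mult)
    hence kk: "real k / real (rb + 1) \<le> real (q + 1)" by (simp add: divide_le_eq)
    have "b ^ (q + 1) = b powr (real (q + 1))"
      using b0 by (simp only: powr_realpow)
    also have "\<dots> \<le> b powr (real k / real (rb + 1))"
      using b0 kk by (intro powr_mono') auto
    also have "\<dots> = ((1 - th) powr (1 / real (rb + 1))) ^ k"
      using b0 by (simp add: b_def powr_power)
    finally have "b ^ (q + 1) \<le> ((1 - th) powr (1 / real (rb + 1))) ^ k" .
    hence "b ^ q * b \<le> ((1 - th) powr (1 / real (rb + 1))) ^ k" by (simp add: mult.commute)
    thus ?thesis using b0 by (simp add: b_def field_simps)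
  qed
  finally show "tv_dist (mpow (lazy (sa_chain p pol)) k x) (\<lambda>(s, a). mu s * pol s a)
     \<le> (1 / (1 - deltab * pol_min pol ^ (rb + 1) * Min (range mub) * pol_min pib / 2))
       * ((1 - deltab * pol_min pol ^ (rb + 1) * Min (range mub) * pol_min pib / 2)
           powr (1 / real (rb + 1))) ^ k"
    unfolding mb by (simp add: L_def th_def)
qed

end
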